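(* Let $G$ be a finite graph and let $\mathcal{B}$ be a set of closed neighborhoods in $G$. Suppose $G$ has four pairwise false twins $u_1,u_2,u_3,u_4$ (i.e. $N(u_i)=N(u_j)$ for all $i,j$) with $N[u_1],\ldots,N[u_4]\in\mathcal{B}$. Then for any non-clashing teaching map $T$ of size $1$ for $\mathcal{B}$, there exists $i\in\{1,2,3,4\}$ such that $T(N[u_i])=\{u_i\}$.
   Context: For a vertex $v$, $N(v)$ is its open neighborhood and $N[v]=N(v)\cup\{v\}$ its closed neighborhood. A teaching map for a set $\mathcal{B}$ of closed neighborhoods assigns to each $B\in\mathcal{B}$ a set $T(B)\subseteq V(G)$ (the examples, each labeled by membership in $B$). A vertex $w$ distinguishes $B,B'$ if $w\in (B\cup B')\setminus(B\cap B')$. $T$ is non-clashing if for all distinct $B,B'\in\mathcal{B}$ some $w\in T(B)\cup T(B')$ distinguishes $B$ and $B'$. The size of $T$ is $\max_{B\in\mathcal{B}}|T(B)|$. *)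

theory Defs
  imports Main
begin

definition graph :: "'a set \<Rightarrow> ('a \<Rightarrow> 'a \<Rightarrow> bool) \<Rightarrow> bool" where
  "graph V E \<longleftrightarrow> finite V \<and> (\<forall>x y. E x y \<longrightarrow> x \<in> V \<and> y \<in> V)
     \<and> (\<forall>x y. E x y \<longrightarrow> E y x) \<and> (\<forall>x. \<not> E x x)"

definition open_nbh :: "'a set \<Rightarrow> ('a \<Rightarrow> 'a \<Rightarrow> bool) \<Rightarrow> 'a \<Rightarrow> 'a set" where
  "open_nbh V E v = {w \<in> V. E v w}"

definition closed_nbh :: "'a set \<Rightarrow> ('a \<Rightarrow> 'a \<Rightarrow> bool) \<Rightarrow> 'a \<Rightarrow> 'a set" where
  "closed_nbh V E v = insert v (open_nbh V E v)"

definition distinguishes :: "'a \<Rightarrow> 'a set \<Rightarrow> 'a set \<Rightarrow> bool" where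
  "distinguishes w B B' \<longleftrightarrow> w \<in> (B \<union> B') - (B \<inter> B')"

definition teaching_map :: "'a set \<Rightarrow> 'a set set \<Rightarrow> ('a set \<Rightarrow> 'a set) \<Rightarrow> bool" where
  "teaching_map V \<B> T \<longleftrightarrow> (\<forall>B\<in>\<B>. T B \<subseteq> V)"

definition non_clashing :: "'a set set \<Rightarrow> ('a set \<Rightarrow> 'a set) \<Rightarrow> bool" where
  "non_clashing \<B> T \<longleftrightarrow> (\<forall>B\<in>\<B>. \<forall>B'\<in>\<B>. B \<noteq> B' \<longrightarrow>
      (\<exists>w \<in> T B \<union> T B'. distinguishes w B B'))"

definition tm_size :: "'a set set \<Rightarrow> ('a set \<Rightarrow> 'a set) \<Rightarrow> nat" where
  "tm_size \<B> T = Max ((\<lambda>B. card (T B)) ` \<B>)"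

end

theory Submission
  imports Defs
begin

lemma c1eq: "finite A \<Longrightarrow> card A \<le> 1 \<Longrightarrow> x \<in> A \<Longrightarrow> y \<in> A \<Longrightarrow> x = y"
  using card_le_Suc0_iff_eq[of A] by simp
lemma c1sing: "finite A \<Longrightarrow> card A \<le> 1 \<Longrightarrow> x \<in> A \<Longrightarrow> A = {x}"
proof -
  assume a: "finite A" "card A \<le> 1" "x \<in> A"
  have "\<And>y. y \<in> A \<Longrightarrow> y = x" using c1eq[OF a(1,2) _ a(3)] by blast
  then show "A = {x}" using a(3) by blast
qed

lemma pig:
  fixes P :: "nat \<Rightarrow> nat \<Rightarrow> bool"
  assumes "\<forall>i\<in>{1..4}. \<forall>j\<in>{1..4}. \<forall>k\<in>{1..4}. P i j \<longrightarrow> P i k \<longrightarrow> j = k"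
    and "\<forall>i\<in>{1..4}. \<not> P i i"
    and "\<forall>i\<in>{1..4}. \<forall>j\<in>{1..4}. i \<noteq> j \<longrightarrow> P i j \<or> P j i"
  shows False
proof -
  have e: "{1..4::nat} = {1,2,3,4}" by auto
  have a: "\<And>j k. P i j \<Longrightarrow> P i k \<Longrightarrow> j \<in> {1,2,3,4} \<Longrightarrow> k \<in> {1,2,3,4} \<Longrightarrow> i \<in> {1,2,3,4} \<Longrightarrow> j = k" for i using assms(1) unfolding e by blast
  have b: "i \<in> {1,2,3,4} \<Longrightarrow> \<not> P i i" for i using assms(2) unfolding e by blast
  have c: "i \<in> {1,2,3,4} \<Longrightarrow> j \<in> {1,2,3,4} \<Longrightarrow> i \<noteq> j \<Longrightarrow> P i j \<or> P j i" for i j using assms(3) unfolding e by blast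
  have "P 1 2 \<or> P 2 1" "P 1 3 \<or> P 3 1" "P 1 4 \<or> P 4 1" "P 2 3 \<or> P 3 2" "P 2 4 \<or> P 4 2" "P 3 4 \<or> P 4 3"
    using c by auto
  moreover have "\<not> (P 1 2 \<and> P 1 3)" "\<not> (P 1 2 \<and> P 1 4)" "\<not> (P 1 3 \<and> P 1 4)"
    "\<not> (P 2 1 \<and> P 2 3)" "\<not> (P 2 1 \<and> P 2 4)" "\<not> (P 2 3 \<and> P 2 4)"
    "\<not> (P 3 1 \<and> P 3 2)" "\<not> (P 3 1 \<and> P 3 4)" "\<not> (P 3 2 \<and> P 3 4)"
    "\<not> (P 4 1 \<and> P 4 2)" "\<not> (P 4 1 \<and> P 4 3)" "\<not> (P 4 2 \<and> P 4 3)"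
    by (auto dest: a)
  ultimately show False by argo
qed

theorem lemma1:
  fixes V :: "'a set" and E :: "'a \<Rightarrow> 'a \<Rightarrow> bool" and \<B> :: "'a set set"
    and T :: "'a set \<Rightarrow> 'a set" and u :: "nat \<Rightarrow> 'a"
  assumes "graph V E"
    and "\<forall>B\<in>\<B>. \<exists>v\<in>V. B = closed_nbh V E v"
    and "\<forall>i\<in>{1..4}. u i \<in> V"
    and "inj_on u {1..4}"
    and "\<forall>i\<in>{1..4}. \<forall>j\<in>{1..4}. open_nbh V E (u i) = open_nbh V E (u j)"
    and "\<forall>i\<in>{1..4}. closed_nbh V E (u i) \<in> \<B>"
    and "teaching_map V \<B> T" and "non_clashing \<B> T" and "tm_size \<B> T = 1"
  shows "\<exists>i\<in>{1..4}. T (closed_nbh V E (u i)) = {u i}"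
proof (rule ccontr)
  assume neg: "\<not> ?thesis"
  define N where "N = open_nbh V E (u 1)"
  have fV: "finite V" using assms(1) unfolding graph_def by blast
  have oN: "open_nbh V E (u i) = N" if "i \<in> {1..4}" for i
  proof -
    have "(1::nat) \<in> {1..4}" by simp
    then show ?thesis unfolding N_def using bspec[OF bspec[OF assms(5) that], of 1] by simp
  qed
  have Bi: "closed_nbh V E (u i) = insert (u i) N" if "i \<in> {1..4}" for i
    unfolding closed_nbh_def using oN[OF that] by simp
  have nN: "u i \<notin> N" if "i \<in> {1..4}" for i
  proof
    assume "u i \<in> N"
    then have "u i \<in> open_nbh V E (u i)" using oN[OF that] by simp
    then have "E (u i) (u i)" unfolding open_nbh_def by simp
    then show False using assms(1) unfolding graph_def by blast
  qed
  have sub: "B \<subseteq> V" if hB: "B \<in> \<B>" for B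
  proof -
    obtain v where v: "v \<in> V" "B = closed_nbh V E v" using bspec[OF assms(2) hB] by (elim bexE)
    show ?thesis unfolding v(2) closed_nbh_def open_nbh_def using v(1) by auto
  qed
  have fB: "finite \<B>"
  proof (rule finite_subset)
    show "\<B> \<subseteq> Pow V" using sub by blast
    show "finite (Pow V)" using fV by simp
  qed
  have card1: "card (T (closed_nbh V E (u i))) \<le> 1" if "i \<in> {1..4}" for i
  proof -
    have m: "card (T (closed_nbh V E (u i))) \<in> (\<lambda>B. card (T B)) ` \<B>"
      using bspec[OF assms(6) that] by (rule imageI)
    have "card (T (closed_nbh V E (u i))) \<le> Max ((\<lambda>B. card (T B)) ` \<B>)"
      using fB m by (intro Max_ge) simp_all
    then show ?thesis using assms(9) unfolding tm_size_def by simp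
  qed
  have fT: "finite (T (closed_nbh V E (u i)))" if "i \<in> {1..4}" for i
  proof (rule finite_subset)
    show "T (closed_nbh V E (u i)) \<subseteq> V"
      using assms(7) bspec[OF assms(6) that] unfolding teaching_map_def by blast
  qed (rule fV)
  define P where "P i j = (u j \<in> T (closed_nbh V E (u i)))" for i j
  show False
  proof (rule pig[of P])
    show "\<forall>i\<in>{1..4}. \<forall>j\<in>{1..4}. \<forall>k\<in>{1..4}. P i j \<longrightarrow> P i k \<longrightarrow> j = k"
    proof (intro ballI impI)
      fix i j k :: nat assume h: "i \<in> {1..4}" "j \<in> {1..4}" "k \<in> {1..4}" "P i j" "P i k"
      have "u j = u k"
        using c1eq[OF fT[OF h(1)] card1[OF h(1)]] h(4,5) unfolding P_def by blast
      then show "j = k" using assms(4) h(2,3) by (meson inj_onD)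
    qed
    show "\<forall>i\<in>{1..4}. \<not> P i i"
    proof
      fix i :: nat assume h: "i \<in> {1..4}"
      show "\<not> P i i"
      proof
        assume "P i i"
        then have "T (closed_nbh V E (u i)) = {u i}"
          using c1sing[OF fT[OF h] card1[OF h]] unfolding P_def by blast
        then show False using neg h by blast
      qed
    qed
    show "\<forall>i\<in>{1..4}. \<forall>j\<in>{1..4}. i \<noteq> j \<longrightarrow> P i j \<or> P j i"
    proof (intro ballI impI)
      fix i j :: nat assume h: "i \<in> {1..4}" "j \<in> {1..4}" "i \<noteq> j"
      have uij: "u i \<noteq> u j" using assms(4) h by (meson inj_onD)
      have ne: "closed_nbh V E (u i) \<noteq> closed_nbh V E (u j)"
        using Bi[OF h(1)] Bi[OF h(2)] nN[OF h(1)] uij by auto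
      then obtain w where w: "w \<in> T (closed_nbh V E (u i)) \<union> T (closed_nbh V E (u j))"
        "distinguishes w (closed_nbh V E (u i)) (closed_nbh V E (u j))"
        using assms(6,8) h unfolding non_clashing_def by blast
      have "w = u i \<or> w = u j" using w(2) Bi[OF h(1)] Bi[OF h(2)]
        unfolding distinguishes_def by auto
      moreover have "u i \<notin> T (closed_nbh V E (u i))"
        using c1sing[OF fT[OF h(1)] card1[OF h(1)]] neg h(1) by blast
      moreover have "u j \<notin> T (closed_nbh V E (u j))"
        using c1sing[OF fT[OF h(2)] card1[OF h(2)]] neg h(2) by blast
      ultimately show "P i j \<or> P j i" using w(1) unfolding P_def by blast
    qed
  qed
qed

end
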